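(* Let $(G,w)$ be a weighted trigraph and let $(A,B,C)$ be a cut-partition of $G$ such that $C=\{c_1,c_2\}$ is a stable set of size two of $G$. For each $X\in\{A,B\}$ let $G_X$ be the trigraph on $X\cup C$ in which $c_1c_2$ is semi-adjacent and all other adjacencies are as in $G[X\cup C]$. For every $C'\subseteq C$ set $\alpha_{A\cup C'}=\alpha(\mathrm{Red}[G_A,w;A\cup C'])+\mathrm{Ext}[G_A,w;A\cup C']$. Define $w_B:D(G_B)\to\mathbb N$ by $w_B(c_1)=\alpha_{A\cup C}-w(c_2)$, $w_B(c_2)=w(c_2)$, $w_B(c_1,c_2)=\alpha_{A\cup\{c_1\}}-\alpha_{A\cup C}+w(c_2)$, $w_B(c_2,c_1)=\alpha_{A\cup\{c_2\}}-w(c_2)$, $w_B(c_1c_2)=\alpha_A$, and $w_B(p)=w(p)$ for all $p\in D(G_B)\setminus D(G_B[C])$. Then $w_B$ is a weight function for $G_B$ (in particular all these values are non-negative), and $\alpha(G_B,w_B)=\alpha(G,w)$.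
   Context: A trigraph $G$ consists of a finite vertex set $V(G)$ and an adjacency function $\theta_G:\binom{V(G)}{2}\to\{-1,0,1\}$; for distinct $u,v$ write $uv$ for $\{u,v\}$. The pair $uv$ is strongly adjacent if $\theta_G(uv)=1$, semi-adjacent if $\theta_G(uv)=0$, strongly anti-adjacent if $\theta_G(uv)=-1$; $u,v$ are anti-adjacent if $\theta_G(uv)\le 0$. A stable set is a set of pairwise anti-adjacent vertices. For $X\subseteq V(G)$, $G[X]$ is the trigraph on $X$ with the restricted adjacency function. A cut-partition of $G$ is a partition $(A,B,C)$ of $V(G)$ with $A,B$ non-empty ($C$ possibly empty) such that every vertex of $A$ is strongly anti-adjacent to every vertex of $B$. $\mathbb N$ denotes the non-negative integers. For a trigraph $G$ let $D(G)=V(G)\cup\{(u,v):u,v\in V(G),u\neq v\}\cup\binom{V(G)}{2}$. A weight function for $G$ is a map $w:D(G)\to\mathbb N$ such that for all distinct $u,v$: if $uv$ is not semi-adjacent then $w(u,v)=w(v,u)=w(uv)=0$, and $w(u,v)\le w(uv)$. A weighted trigraph is a pair $(G,w)$ with $w$ a weight function for $G$; for an induced subtrigraph $H$, $(H,w)$ denotes $(H,w|_{D(H)})$; note $w$ restricted to $D(G_A)$ is a weight function for $G_A$. The weight of $S\subseteq V(G)$ is $\llbracket S\rrbracket_{(G,w)}=\sum_{u\in S}w(u)+\sum_{u\in S}\sum_{v\in V(G)\setminus S}w(u,v)+\sum_{uv\in\binom{V(G)\setminus S}{2}}w(uv)$, and $\alpha(G,w)=\max\{\llbracket S\rrbracket_{(G,w)}: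 S \text{ a stable set of } G\}$. For $R\subseteq V(G)$, the reduction $\mathrm{Red}[G,w;R]$ is the weighted trigraph $(G[R],w')$ where $w'(u)=\max\{w(u)-\sum_{v\in V(G)\setminus R}(w(uv)-w(u,v)),0\}$ for $u\in R$, and $w'(u,v)=w(u,v)$, $w'(uv)=w(uv)$ for distinct $u,v\in R$. The exterior weight is $\mathrm{Ext}[G,w;R]=\sum_{uv\in\binom{V(G)\setminus R}{2}}w(uv)+\sum_{u\in R}\sum_{v\in V(G)\setminus R}w(uv)$. *)

theory Defs
  imports Main
begin

(* A trigraph: finite vertex set together with an adjacency function on
   2-element subsets {u,v} of the vertex set with values in {-1,0,1}. *)
type_synonym 'a trigraph = "'a set \<times> ('a set \<Rightarrow> int)"

definition verts :: "'a trigraph \<Rightarrow> 'a set" where "verts G = fst G"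
definition theta :: "'a trigraph \<Rightarrow> 'a \<Rightarrow> 'a \<Rightarrow> int" where "theta G u v = snd G {u, v}"

definition is_trigraph :: "'a trigraph \<Rightarrow> bool" where
  "is_trigraph G \<longleftrightarrow> finite (verts G) \<and>
     (\<forall>u\<in>verts G. \<forall>v\<in>verts G. u \<noteq> v \<longrightarrow> theta G u v \<in> {-1, 0, 1})"

definition binom2 :: "'a set \<Rightarrow> 'a set set" where
  "binom2 X = {e. e \<subseteq> X \<and> card e = 2}"

definition induced :: "'a trigraph \<Rightarrow> 'a set \<Rightarrow> 'a trigraph" where
  "induced G X = (X, snd G)"

definition stable :: "'a trigraph \<Rightarrow> 'a set \<Rightarrow> bool" where
  "stable G S \<longleftrightarrow> S \<subseteq> verts G \<and> (\<forall>u\<in>S. \<forall>v\<in>S. u \<noteq> v \<longrightarrow> theta G u v \<le> 0)"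

definition cut_partition :: "'a trigraph \<Rightarrow> 'a set \<Rightarrow> 'a set \<Rightarrow> 'a set \<Rightarrow> bool" where
  "cut_partition G A B C \<longleftrightarrow> A \<union> B \<union> C = verts G \<and> A \<inter> B = {} \<and> A \<inter> C = {} \<and>
     B \<inter> C = {} \<and> A \<noteq> {} \<and> B \<noteq> {} \<and> (\<forall>a\<in>A. \<forall>b\<in>B. theta G a b = -1)"

(* Elements of D(G): vertices, ordered pairs (u,v), unordered pairs {u,v} *)
datatype 'a delem = DV 'a | DO 'a 'a | DU "'a set"

definition Dset :: "'a trigraph \<Rightarrow> 'a delem set" where
  "Dset G = DV ` verts G \<union> {DO u v |u v. u \<in> verts G \<and> v \<in> verts G \<and> u \<noteq> v}
            \<union> DU ` binom2 (verts G)"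

(* Weights are int-valued functions; being a weight function requires
   non-negativity (values in N) on D(G). *)
definition weight_fun :: "'a trigraph \<Rightarrow> ('a delem \<Rightarrow> int) \<Rightarrow> bool" where
  "weight_fun G w \<longleftrightarrow> (\<forall>p\<in>Dset G. w p \<ge> 0) \<and>
     (\<forall>u\<in>verts G. \<forall>v\<in>verts G. u \<noteq> v \<longrightarrow>
        (theta G u v \<noteq> 0 \<longrightarrow> w (DO u v) = 0 \<and> w (DO v u) = 0 \<and> w (DU {u, v}) = 0) \<and>
        w (DO u v) \<le> w (DU {u, v}))"

definition setweight :: "'a trigraph \<Rightarrow> ('a delem \<Rightarrow> int) \<Rightarrow> 'a set \<Rightarrow> int" where
  "setweight G w S = (\<Sum>u\<in>S. w (DV u)) + (\<Sum>u\<in>S. \<Sum>v\<in>verts G - S. w (DO u v))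
       + (\<Sum>e\<in>binom2 (verts G - S). w (DU e))"

definition alpha :: "'a trigraph \<Rightarrow> ('a delem \<Rightarrow> int) \<Rightarrow> int" where
  "alpha G w = Max (setweight G w ` {S. stable G S})"

definition red_w :: "'a trigraph \<Rightarrow> ('a delem \<Rightarrow> int) \<Rightarrow> 'a set \<Rightarrow> 'a delem \<Rightarrow> int" where
  "red_w G w R p = (case p of
      DV u \<Rightarrow> max (w (DV u) - (\<Sum>v\<in>verts G - R. w (DU {u, v}) - w (DO u v))) 0
    | _ \<Rightarrow> w p)"

definition Red :: "'a trigraph \<Rightarrow> ('a delem \<Rightarrow> int) \<Rightarrow> 'a set \<Rightarrow> 'a trigraph \<times> ('a delem \<Rightarrow> int)" where
  "Red G w R = (induced G R, red_w G w R)"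

definition Ext :: "'a trigraph \<Rightarrow> ('a delem \<Rightarrow> int) \<Rightarrow> 'a set \<Rightarrow> int" where
  "Ext G w R = (\<Sum>e\<in>binom2 (verts G - R). w (DU e))
      + (\<Sum>u\<in>R. \<Sum>v\<in>verts G - R. w (DU {u, v}))"

definition GX :: "'a trigraph \<Rightarrow> 'a set \<Rightarrow> 'a \<Rightarrow> 'a \<Rightarrow> 'a trigraph" where
  "GX G X c1 c2 = (X \<union> {c1, c2}, \<lambda>e. if e = {c1, c2} then 0 else snd G e)"

definition alphaR :: "'a trigraph \<Rightarrow> ('a delem \<Rightarrow> int) \<Rightarrow> 'a set \<Rightarrow> int" where
  "alphaR H w R = alpha (fst (Red H w R)) (snd (Red H w R)) + Ext H w R"

definition wB :: "'a trigraph \<Rightarrow> ('a delem \<Rightarrow> int) \<Rightarrow> 'a set \<Rightarrow> 'a \<Rightarrow> 'a \<Rightarrow> 'a delem \<Rightarrow> int" where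
  "wB G w A c1 c2 p =
     (let GA = GX G A c1 c2;
          aAC = alphaR GA w (A \<union> {c1, c2});
          aA1 = alphaR GA w (A \<union> {c1});
          aA2 = alphaR GA w (A \<union> {c2});
          aA  = alphaR GA w A
      in if p = DV c1 then aAC - w (DV c2)
         else if p = DV c2 then w (DV c2)
         else if p = DO c1 c2 then aA1 - aAC + w (DV c2)
         else if p = DO c2 c1 then aA2 - w (DV c2)
         else if p = DU {c1, c2} then aA
         else w p)"

end

theory Submission
  imports Defs
begin


definition offd :: "'a set \<Rightarrow> ('a \<times> 'a) set" where
  "offd X = {p. fst p \<in> X \<and> snd p \<in> X \<and> fst p \<noteq> snd p}"

definition pc :: "('a delem \<Rightarrow> int) \<Rightarrow> 'a set \<Rightarrow> 'a \<times> 'a \<Rightarrow> int" where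
  "pc w S p = (if fst p \<in> S \<and> snd p \<notin> S then w (DO (fst p) (snd p)) else 0)
     + (if snd p \<in> S \<and> fst p \<notin> S then w (DO (snd p) (fst p)) else 0)
     + (if fst p \<notin> S \<and> snd p \<notin> S then w (DU {fst p, snd p}) else 0)"

definition W :: "'a set \<Rightarrow> ('a delem \<Rightarrow> int) \<Rightarrow> 'a set \<Rightarrow> int" where
  "W V w S = setweight (V, \<lambda>_. 0) w S"

definition wok :: "'a set \<Rightarrow> ('a delem \<Rightarrow> int) \<Rightarrow> bool" where
  "wok V w \<longleftrightarrow> (\<forall>u\<in>V. 0 \<le> w (DV u)) \<and>
     (\<forall>u\<in>V. \<forall>v\<in>V. u \<noteq> v \<longrightarrow> 0 \<le> w (DO u v) \<and> w (DO u v) \<le> w (DU {u, v}))"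

lemma sw_W: "setweight G w S = W (verts G) w S"
  by (simp add: W_def setweight_def verts_def)

lemma finite_offd: "finite X \<Longrightarrow> finite (offd X)"
  by (rule finite_subset[of _ "X \<times> X"]) (auto simp: offd_def)

lemma offd_mono: "X \<subseteq> Y \<Longrightarrow> offd X \<subseteq> offd Y"
  by (auto simp: offd_def)

lemma IND:
  assumes "finite V" "X \<subseteq> V" "Y \<subseteq> V" "X \<inter> Y = {}"
  shows "(\<Sum>p\<in>offd V. if fst p \<in> X \<and> snd p \<in> Y then f p else 0) = (\<Sum>u\<in>X. \<Sum>v\<in>Y. f (u, v))"
proof -
  have "(\<Sum>p\<in>offd V. if fst p \<in> X \<and> snd p \<in> Y then f p else 0)
      = (\<Sum>p\<in>{p\<in>offd V. fst p \<in> X \<and> snd p \<in> Y}. f p)"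
    by (simp add: sum.inter_filter finite_offd assms)
  also have "{p\<in>offd V. fst p \<in> X \<and> snd p \<in> Y} = X \<times> Y"
    using assms by (auto simp: offd_def)
  also have "(\<Sum>p\<in>X \<times> Y. f p) = (\<Sum>u\<in>X. \<Sum>v\<in>Y. f (u, v))"
    by (simp add: sum.cartesian_product)
  finally show ?thesis .
qed

lemma FIL:
  assumes "finite V" "X \<subseteq> V"
  shows "(\<Sum>p\<in>offd V. if p \<in> offd X then f p else 0) = (\<Sum>p\<in>offd X. f p)"
proof -
  have "(\<Sum>p\<in>offd V. if p \<in> offd X then f p else 0) = (\<Sum>p\<in>{p\<in>offd V. p \<in> offd X}. f p)"
    by (simp add: sum.inter_filter finite_offd assms)
  also have "{p\<in>offd V. p \<in> offd X} = offd X"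
    using assms offd_mono by blast
  finally show ?thesis .
qed

lemma L2:
  fixes f :: "'a set \<Rightarrow> int"
  assumes "finite X"
  shows "(\<Sum>p\<in>offd X. f {fst p, snd p}) = 2 * (\<Sum>e\<in>binom2 X. f e)"
proof -
  have im: "(\<lambda>p. {fst p, snd p}) ` offd X = binom2 X"
  proof
    show "(\<lambda>p. {fst p, snd p}) ` offd X \<subseteq> binom2 X"
      by (auto simp: offd_def binom2_def)
    show "binom2 X \<subseteq> (\<lambda>p. {fst p, snd p}) ` offd X"
    proof
      fix e assume "e \<in> binom2 X"
      then obtain a b where "a \<noteq> b" "e = {a, b}" "e \<subseteq> X"
        by (auto simp: binom2_def card_2_iff)
      then show "e \<in> (\<lambda>p. {fst p, snd p}) ` offd X"
        by (intro image_eqI[of _ _ "(a, b)"]) (auto simp: offd_def)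
    qed
  qed
  have "(\<Sum>p\<in>offd X. f {fst p, snd p})
      = (\<Sum>e\<in>(\<lambda>p. {fst p, snd p}) ` offd X. \<Sum>p\<in>{p. p \<in> offd X \<and> {fst p, snd p} = e}. f {fst p, snd p})"
    by (rule sum.image_gen[OF finite_offd[OF assms]])
  also have "\<dots> = (\<Sum>e\<in>binom2 X. 2 * f e)"
    unfolding im
  proof (rule sum.cong[OF refl])
    fix e assume "e \<in> binom2 X"
    then obtain a b where ab: "a \<noteq> b" "e = {a, b}" "e \<subseteq> X"
      by (auto simp: binom2_def card_2_iff)
    have "{p. p \<in> offd X \<and> {fst p, snd p} = e} = {(a, b), (b, a)}"
      using ab by (auto simp: offd_def doubleton_eq_iff)
    then show "(\<Sum>p\<in>{p. p \<in> offd X \<and> {fst p, snd p} = e}. f {fst p, snd p}) = 2 * f e"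
      using ab by (simp add: insert_commute)
  qed
  finally show ?thesis by (simp add: sum_distrib_left)
qed

lemma sw2:
  assumes "finite V" "S \<subseteq> V"
  shows "2 * W V w S = 2 * (\<Sum>u\<in>S. w (DV u)) + (\<Sum>p\<in>offd V. pc w S p)"
proof -
  have fo: "finite (offd V)" using finite_offd assms by blast
  have e1: "(\<Sum>p\<in>offd V. pc w S p) =
      (\<Sum>p\<in>offd V. if fst p \<in> S \<and> snd p \<in> V - S then w (DO (fst p) (snd p)) else 0)
    + (\<Sum>p\<in>offd V. if fst p \<in> V - S \<and> snd p \<in> S then w (DO (snd p) (fst p)) else 0)
    + (\<Sum>p\<in>offd V. if p \<in> offd (V - S) then w (DU {fst p, snd p}) else 0)"
    unfolding sum.distrib[symmetric]
    by (rule sum.cong[OF refl]) (auto simp: pc_def offd_def)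
  have t1: "(\<Sum>p\<in>offd V. if fst p \<in> S \<and> snd p \<in> V - S then w (DO (fst p) (snd p)) else 0)
      = (\<Sum>u\<in>S. \<Sum>v\<in>V - S. w (DO u v))"
    using IND[OF assms(1) assms(2), of "V - S" "\<lambda>p. w (DO (fst p) (snd p))"] by auto
  have t2: "(\<Sum>p\<in>offd V. if fst p \<in> V - S \<and> snd p \<in> S then w (DO (snd p) (fst p)) else 0)
      = (\<Sum>u\<in>S. \<Sum>v\<in>V - S. w (DO u v))"
    using IND[OF assms(1) _ assms(2), of "V - S" "\<lambda>p. w (DO (snd p) (fst p))"]
    by (auto simp: sum.swap[of _ "V - S"])
  have t3: "(\<Sum>p\<in>offd V. if p \<in> offd (V - S) then w (DU {fst p, snd p}) else 0)
      = 2 * (\<Sum>e\<in>binom2 (V - S). w (DU e))"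
    using FIL[OF assms(1), of "V - S" "\<lambda>p. w (DU {fst p, snd p})"] L2[of "V - S" "\<lambda>e. w (DU e)"] assms by auto
  show ?thesis
    unfolding e1 t1 t2 t3 by (simp add: W_def setweight_def verts_def)
qed


lemma wokp:
  assumes "wok V w" "p \<in> offd V"
  shows "0 \<le> w (DO (fst p) (snd p)) \<and> w (DO (fst p) (snd p)) \<le> w (DU {fst p, snd p})
       \<and> 0 \<le> w (DO (snd p) (fst p)) \<and> w (DO (snd p) (fst p)) \<le> w (DU {fst p, snd p})"
  using assms unfolding wok_def offd_def by (auto simp: insert_commute)

lemma PCM:
  assumes "S2 \<subseteq> S1" "0 \<le> w (DO (fst p) (snd p))" "w (DO (fst p) (snd p)) \<le> w (DU {fst p, snd p})"
    "0 \<le> w (DO (snd p) (fst p))" "w (DO (snd p) (fst p)) \<le> w (DU {fst p, snd p})"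
  shows "pc w S1 p \<le> pc w S2 p"
  using assms unfolding pc_def by auto

lemma pc_nonneg:
  assumes "0 \<le> w (DO (fst p) (snd p))" "w (DO (fst p) (snd p)) \<le> w (DU {fst p, snd p})"
    "0 \<le> w (DO (snd p) (fst p))"
  shows "0 \<le> pc w S p"
  using assms unfolding pc_def by auto

lemma W_ge:
  assumes "finite V" "wok V w" "S \<subseteq> V"
  shows "(\<Sum>u\<in>S. w (DV u)) \<le> W V w S"
proof -
  have "0 \<le> (\<Sum>p\<in>offd V. pc w S p)"
    by (rule sum_nonneg) (use wokp[OF assms(2)] pc_nonneg in blast)
  then show ?thesis using sw2[OF assms(1,3), of w] by linarith
qed

lemma W_nonneg:
  assumes "finite V" "wok V w" "S \<subseteq> V"
  shows "0 \<le> W V w S"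
proof -
  have "0 \<le> (\<Sum>u\<in>S. w (DV u))"
    by (rule sum_nonneg) (use assms in \<open>auto simp: wok_def\<close>)
  then show ?thesis using W_ge[OF assms] by linarith
qed

lemma R1:
  assumes "finite V" "wok V w" "S \<subseteq> V" "x \<in> S"
  shows "W V w S - w (DV x) \<le> W V w (S - {x})"
proof -
  have fS: "finite S" using assms finite_subset by blast
  have "(\<Sum>p\<in>offd V. pc w S p) \<le> (\<Sum>p\<in>offd V. pc w (S - {x}) p)"
    by (rule sum_mono) (use wokp[OF assms(2)] PCM[of "S - {x}" S] in blast)
  moreover have "(\<Sum>u\<in>S. w (DV u)) = w (DV x) + (\<Sum>u\<in>S - {x}. w (DV u))"
    using fS assms(4) by (simp add: sum.remove)
  ultimately show ?thesis using sw2[OF assms(1,3), of w] sw2[OF assms(1), of "S - {x}" w] assms(3)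
    by fastforce
qed

lemma Qeq:
  assumes "finite V" "C \<subseteq> V" "S \<subseteq> V"
  shows "2 * W V w S - 2 * W C w (S \<inter> C) =
     2 * (\<Sum>u\<in>S - C. w (DV u)) + (\<Sum>p\<in>offd V - offd C. pc w S p)"
proof -
  have fS: "finite S" using assms finite_subset by blast
  have fC: "finite C" using assms finite_subset by blast
  have a: "(\<Sum>u\<in>S. w (DV u)) = (\<Sum>u\<in>S - C. w (DV u)) + (\<Sum>u\<in>S \<inter> C. w (DV u))"
    using sum.subset_diff[of "S \<inter> C" S "\<lambda>u. w (DV u)"] fS by (simp add: Diff_Int)
  have b: "(\<Sum>p\<in>offd V. pc w S p) = (\<Sum>p\<in>offd V - offd C. pc w S p) + (\<Sum>p\<in>offd C. pc w S p)"
    using sum.subset_diff[of "offd C" "offd V" "pc w S"] finite_offd[OF assms(1)] offd_mono[OF assms(2)]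
    by simp
  have c: "(\<Sum>p\<in>offd C. pc w (S \<inter> C) p) = (\<Sum>p\<in>offd C. pc w S p)"
    by (rule sum.cong[OF refl]) (auto simp: pc_def offd_def)
  show ?thesis using sw2[OF assms(1,3), of w] sw2[OF fC, of "S \<inter> C" w] a b c by simp
qed

lemma Qcong:
  assumes "finite V" "C \<subseteq> V" "S \<subseteq> V"
    and "\<And>u. u \<in> V - C \<Longrightarrow> w' (DV u) = w (DV u)"
    and "\<And>u v. u \<in> V \<Longrightarrow> v \<in> V \<Longrightarrow> \<not> (u \<in> C \<and> v \<in> C) \<Longrightarrow> w' (DO u v) = w (DO u v)"
    and "\<And>u v. u \<in> V \<Longrightarrow> v \<in> V \<Longrightarrow> \<not> (u \<in> C \<and> v \<in> C) \<Longrightarrow> w' (DU {u, v}) = w (DU {u, v})"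
  shows "W V w' S - W C w' (S \<inter> C) = W V w S - W C w (S \<inter> C)"
proof -
  have "(\<Sum>u\<in>S - C. w' (DV u)) = (\<Sum>u\<in>S - C. w (DV u))"
    by (rule sum.cong[OF refl]) (use assms in auto)
  moreover have "(\<Sum>p\<in>offd V - offd C. pc w' S p) = (\<Sum>p\<in>offd V - offd C. pc w S p)"
  proof (rule sum.cong[OF refl])
    fix p assume p: "p \<in> offd V - offd C"
    then have "fst p \<in> V" "snd p \<in> V" "\<not> (fst p \<in> C \<and> snd p \<in> C)"
      by (auto simp: offd_def)
    then show "pc w' S p = pc w S p"
      unfolding pc_def using assms(5,6) by metis
  qed
  ultimately show ?thesis using Qeq[OF assms(1-3), of w] Qeq[OF assms(1-3), of w'] by linarith
qed

lemma Qmono: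
  assumes "finite V" "C \<subseteq> V" "S1 \<subseteq> V" "S2 \<subseteq> S1" "S1 - S2 \<subseteq> C" "wok V w"
  shows "W V w S1 - W C w (S1 \<inter> C) \<le> W V w S2 - W C w (S2 \<inter> C)"
proof -
  have "S1 - C = S2 - C" using assms by blast
  moreover have "(\<Sum>p\<in>offd V - offd C. pc w S1 p) \<le> (\<Sum>p\<in>offd V - offd C. pc w S2 p)"
    by (rule sum_mono) (use wokp[OF assms(6)] PCM[OF assms(4)] in blast)
  ultimately show ?thesis using Qeq[OF assms(1-3), of w] Qeq[OF assms(1,2), of S2 w] assms(3,4)
    by fastforce
qed


lemma UL_pair:
  assumes "P \<subseteq> S1" "c \<notin> S1" "0 \<le> w (DO (fst p) (snd p))" "w (DO (fst p) (snd p)) \<le> w (DU {fst p, snd p})"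
    "0 \<le> w (DO (snd p) (fst p))" "w (DO (snd p) (fst p)) \<le> w (DU {fst p, snd p})"
  shows "pc w S1 p \<le> pc w (S1 - P \<union> {c}) p + pc w P p"
  using assms unfolding pc_def by auto

lemma UL:
  assumes "finite V" "wok V w" "S1 \<subseteq> V" "c \<in> V - S1" "P \<subseteq> S1"
  shows "W V w S1 + w (DV c) \<le> W V w (S1 - P \<union> {c}) + W V w P"
proof -
  have fS: "finite S1" using assms finite_subset by blast
  have "(\<Sum>p\<in>offd V. pc w S1 p) \<le> (\<Sum>p\<in>offd V. pc w (S1 - P \<union> {c}) p + pc w P p)"
    by (rule sum_mono) (use wokp[OF assms(2)] UL_pair[OF assms(5)] assms(4) in blast)
  moreover have "(\<Sum>u\<in>S1 - P \<union> {c}. w (DV u)) = w (DV c) + (\<Sum>u\<in>S1 - P. w (DV u))"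
    using fS assms(4) by simp
  moreover have "(\<Sum>u\<in>S1. w (DV u)) = (\<Sum>u\<in>S1 - P. w (DV u)) + (\<Sum>u\<in>P. w (DV u))"
    using sum.subset_diff[OF assms(5) fS] by simp
  moreover have "S1 - P \<union> {c} \<subseteq> V" "P \<subseteq> V" using assms by auto
  ultimately show ?thesis using sw2[OF assms(1,3), of w] sw2[OF assms(1), of "S1 - P \<union> {c}" w]
      sw2[OF assms(1), of P w] by (simp add: sum.distrib)
qed

lemma alpha_ge:
  assumes "finite (verts G)" "stable G S"
  shows "setweight G w S \<le> alpha G w"
proof -
  have "finite {S. stable G S}"
    by (rule finite_subset[of _ "Pow (verts G)"]) (use assms in \<open>auto simp: stable_def\<close>)
  then show ?thesis unfolding alpha_def using assms by (intro Max_ge) auto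
qed

lemma alpha_ex:
  assumes "finite (verts G)"
  shows "\<exists>S. stable G S \<and> alpha G w = setweight G w S"
proof -
  have "finite {S. stable G S}"
    by (rule finite_subset[of _ "Pow (verts G)"]) (use assms in \<open>auto simp: stable_def\<close>)
  moreover have "stable G {}" by (simp add: stable_def)
  ultimately have "alpha G w \<in> setweight G w ` {S. stable G S}"
    unfolding alpha_def by (intro Max_in) auto
  then show ?thesis by auto
qed

lemma verts_induced: "verts (induced H R) = R"
  by (simp add: induced_def verts_def)

lemma stable_induced:
  "stable (induced H R) S \<longleftrightarrow> S \<subseteq> R \<and> (\<forall>u\<in>S. \<forall>v\<in>S. u \<noteq> v \<longrightarrow> theta H u v \<le> 0)"
  by (simp add: stable_def induced_def verts_def theta_def)

definition DD :: "'a set \<Rightarrow> ('a delem \<Rightarrow> int) \<Rightarrow> 'a set \<Rightarrow> 'a \<Rightarrow> int" where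
  "DD V w R u = (\<Sum>v\<in>V - R. w (DU {u, v}) - w (DO u v))"

lemma red_DV: "red_w H w R (DV u) = max (w (DV u) - DD (verts H) w R u) 0"
  by (simp add: red_w_def DD_def)

lemma pc_red: "pc (red_w H w R) S p = pc w S p"
  by (simp add: pc_def red_w_def)

lemma K:
  assumes "finite V" "verts H = V" "R \<subseteq> V" "S \<subseteq> R"
  shows "2 * (W R (red_w H w R) S + Ext H w R) =
    2 * W V w S + 2 * (\<Sum>u\<in>S. red_w H w R (DV u) - w (DV u) + DD V w R u)"
proof -
  have fR: "finite R" using assms finite_subset by blast
  have SV: "S \<subseteq> V" using assms by blast
  let ?U = "\<lambda>p. w (DU {fst p, snd p})"
  have pt: "(\<Sum>p\<in>offd V. pc w S p) =
     (\<Sum>p\<in>offd V. if p \<in> offd R then pc w S p else 0)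
   + (\<Sum>p\<in>offd V. if p \<in> offd (V - R) then ?U p else 0)
   + (\<Sum>p\<in>offd V. if fst p \<in> R \<and> snd p \<in> V - R then ?U p else 0)
   + (\<Sum>p\<in>offd V. if fst p \<in> V - R \<and> snd p \<in> R then ?U p else 0)
   - (\<Sum>p\<in>offd V. if fst p \<in> S \<and> snd p \<in> V - R then ?U p - w (DO (fst p) (snd p)) else 0)
   - (\<Sum>p\<in>offd V. if fst p \<in> V - R \<and> snd p \<in> S then ?U p - w (DO (snd p) (fst p)) else 0)"
    unfolding sum.distrib[symmetric] sum_subtractf[symmetric]
    by (rule sum.cong[OF refl]) (use assms in \<open>auto simp: pc_def offd_def\<close>)
  have i1: "(\<Sum>p\<in>offd V. if p \<in> offd R then pc w S p else 0) = (\<Sum>p\<in>offd R. pc w S p)"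
    by (rule FIL[OF assms(1,3)])
  have i2: "(\<Sum>p\<in>offd V. if p \<in> offd (V - R) then ?U p else 0) = 2 * (\<Sum>e\<in>binom2 (V - R). w (DU e))"
    using FIL[OF assms(1), of "V - R" ?U] L2[of "V - R" "\<lambda>e. w (DU e)"] assms(1) by auto
  have i3: "(\<Sum>p\<in>offd V. if fst p \<in> R \<and> snd p \<in> V - R then ?U p else 0)
      = (\<Sum>u\<in>R. \<Sum>v\<in>V - R. w (DU {u, v}))"
    using IND[OF assms(1,3), of "V - R" ?U] by auto
  have i4: "(\<Sum>p\<in>offd V. if fst p \<in> V - R \<and> snd p \<in> R then ?U p else 0)
      = (\<Sum>u\<in>R. \<Sum>v\<in>V - R. w (DU {u, v}))"
    using IND[OF assms(1) _ assms(3), of "V - R" ?U]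
    by (auto simp: sum.swap[of _ "V - R"] insert_commute)
  have i5: "(\<Sum>p\<in>offd V. if fst p \<in> S \<and> snd p \<in> V - R then ?U p - w (DO (fst p) (snd p)) else 0)
      = (\<Sum>u\<in>S. DD V w R u)"
    using IND[OF assms(1) SV, of "V - R" "\<lambda>p. ?U p - w (DO (fst p) (snd p))"] assms
    by (auto simp: DD_def)
  have i6: "(\<Sum>p\<in>offd V. if fst p \<in> V - R \<and> snd p \<in> S then ?U p - w (DO (snd p) (fst p)) else 0)
      = (\<Sum>u\<in>S. DD V w R u)"
    using IND[OF assms(1) _ SV, of "V - R" "\<lambda>p. ?U p - w (DO (snd p) (fst p))"] assms
    by (auto simp: DD_def sum.swap[of _ "V - R"] insert_commute)
  have e: "2 * Ext H w R = 2 * (\<Sum>e\<in>binom2 (V - R). w (DU e)) + 2 * (\<Sum>u\<in>R. \<Sum>v\<in>V - R. w (DU {u, v}))"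
    using assms(2) by (simp add: Ext_def)
  have w1: "2 * W R (red_w H w R) S = 2 * (\<Sum>u\<in>S. red_w H w R (DV u)) + (\<Sum>p\<in>offd R. pc w S p)"
    using sw2[OF fR assms(4), of "red_w H w R"] by (simp add: pc_red)
  have w2: "2 * W V w S = 2 * (\<Sum>u\<in>S. w (DV u)) + (\<Sum>p\<in>offd V. pc w S p)"
    using sw2[OF assms(1) SV] .
  show ?thesis
    using pt i1 i2 i3 i4 i5 i6 e w1 w2
    by (simp add: sum.distrib sum_subtractf algebra_simps)
qed


lemma alphaR_eq: "alphaR H w R = alpha (induced H R) (red_w H w R) + Ext H w R"
  by (simp add: alphaR_def Red_def)

lemma red_ge:
  assumes "finite V" "verts H = V" "R \<subseteq> V" "stable H S" "S \<subseteq> R"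
  shows "W V w S \<le> alphaR H w R"
proof -
  have fR: "finite R" by (rule finite_subset[OF assms(3,1)])
  have "stable (induced H R) S" unfolding stable_induced using assms(4,5) unfolding stable_def by blast
  then have "W R (red_w H w R) S \<le> alpha (induced H R) (red_w H w R)"
    using alpha_ge[of "induced H R" S] fR by (simp add: verts_induced sw_W)
  moreover have "0 \<le> (\<Sum>u\<in>S. red_w H w R (DV u) - w (DV u) + DD V w R u)"
    by (rule sum_nonneg) (simp add: red_DV assms(2))
  ultimately show ?thesis using K[OF assms(1,2,3,5), of w] by (simp add: alphaR_eq)
qed


lemma R2:
  assumes "finite V" "wok V w" "R \<subseteq> V" "S0 \<subseteq> R" "S1 \<subseteq> S0"
  shows "2 * W V w S0 + 2 * (\<Sum>u\<in>S0 - S1. DD V w R u - w (DV u)) \<le> 2 * W V w S1"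
proof -
  let ?E = "S0 - S1"
  let ?U = "\<lambda>p. w (DU {fst p, snd p})"
  have SV: "S0 \<subseteq> V" "S1 \<subseteq> V" "?E \<subseteq> V" using assms(3,4,5) by blast+
  have fS: "finite S0" by (rule finite_subset[OF SV(1) assms(1)])
  have pt: "(\<Sum>p\<in>offd V. pc w S0 p + (if fst p \<in> ?E \<and> snd p \<in> V - R then ?U p - w (DO (fst p) (snd p)) else 0)
       + (if fst p \<in> V - R \<and> snd p \<in> ?E then ?U p - w (DO (snd p) (fst p)) else 0))
     \<le> (\<Sum>p\<in>offd V. pc w S1 p)"
  proof (rule sum_mono)
    fix p assume p: "p \<in> offd V"
    note h = wokp[OF assms(2) p]
    show "pc w S0 p + (if fst p \<in> ?E \<and> snd p \<in> V - R then ?U p - w (DO (fst p) (snd p)) else 0)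
       + (if fst p \<in> V - R \<and> snd p \<in> ?E then ?U p - w (DO (snd p) (fst p)) else 0) \<le> pc w S1 p"
    proof (cases "fst p \<in> ?E \<and> snd p \<in> V - R")
      case True
      then have m: "fst p \<in> S0" "fst p \<notin> S1" "snd p \<notin> S0" "snd p \<notin> S1" "fst p \<in> R"
        using assms(4,5) by auto
      then have n: "\<not> (fst p \<in> V - R \<and> snd p \<in> ?E)" by blast
      show ?thesis using True n m unfolding pc_def by simp
    next
      case F1: False
      show ?thesis
      proof (cases "fst p \<in> V - R \<and> snd p \<in> ?E")
        case True
        then have m: "snd p \<in> S0" "snd p \<notin> S1" "fst p \<notin> S0" "fst p \<notin> S1"
          using assms(4,5) by auto
        show ?thesis using True F1 m h unfolding pc_def by (simp add: insert_commute)
      next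
        case False
        have "pc w S0 p \<le> pc w S1 p" using PCM[OF assms(5), of w p] h by blast
        then show ?thesis by (simp only: if_not_P[OF F1] if_not_P[OF False])
      qed
    qed
  qed
  have i1: "(\<Sum>p\<in>offd V. if fst p \<in> ?E \<and> snd p \<in> V - R then ?U p - w (DO (fst p) (snd p)) else 0)
     = (\<Sum>u\<in>?E. DD V w R u)"
    using IND[OF assms(1) SV(3), of "V - R" "\<lambda>p. ?U p - w (DO (fst p) (snd p))"] assms
    by (auto simp: DD_def)
  have i2: "(\<Sum>p\<in>offd V. if fst p \<in> V - R \<and> snd p \<in> ?E then ?U p - w (DO (snd p) (fst p)) else 0)
     = (\<Sum>u\<in>?E. DD V w R u)"
    using IND[OF assms(1) _ SV(3), of "V - R" "\<lambda>p. ?U p - w (DO (snd p) (fst p))"] assms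
    by (auto simp: DD_def sum.swap[of _ "V - R"] insert_commute)
  have s: "(\<Sum>u\<in>S0. w (DV u)) = (\<Sum>u\<in>?E. w (DV u)) + (\<Sum>u\<in>S1. w (DV u))"
    using sum.subset_diff[OF assms(5) fS] by simp
  show ?thesis
    using pt i1 i2 s sw2[OF assms(1) SV(1), of w] sw2[OF assms(1) SV(2), of w]
    by (simp add: sum.distrib sum_subtractf algebra_simps)
qed


lemma red_le:
  assumes "finite V" "verts H = V" "R \<subseteq> V" "wok V w"
  shows "\<exists>S. stable H S \<and> S \<subseteq> R \<and> alphaR H w R \<le> W V w S"
proof -
  have fR: "finite R" by (rule finite_subset[OF assms(3,1)])
  obtain S0 where S0: "stable (induced H R) S0"
    "alpha (induced H R) (red_w H w R) = W R (red_w H w R) S0"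
    using alpha_ex[of "induced H R" "red_w H w R"] fR by (auto simp: verts_induced sw_W)
  have S0R: "S0 \<subseteq> R" using S0(1) by (simp add: stable_induced)
  define S1 where "S1 = {u\<in>S0. 0 \<le> w (DV u) - DD V w R u}"
  have S10: "S1 \<subseteq> S0" by (auto simp: S1_def)
  have fS: "finite S0" by (rule finite_subset[OF S0R fR])
  have "(\<Sum>u\<in>S0. red_w H w R (DV u) - w (DV u) + DD V w R u)
     = (\<Sum>u\<in>S0 - S1. red_w H w R (DV u) - w (DV u) + DD V w R u)
       + (\<Sum>u\<in>S1. red_w H w R (DV u) - w (DV u) + DD V w R u)"
    using sum.subset_diff[OF S10 fS] by simp
  also have "(\<Sum>u\<in>S1. red_w H w R (DV u) - w (DV u) + DD V w R u) = 0"
    by (rule sum.neutral) (auto simp: S1_def red_DV assms(2))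
  also have "(\<Sum>u\<in>S0 - S1. red_w H w R (DV u) - w (DV u) + DD V w R u)
      = (\<Sum>u\<in>S0 - S1. DD V w R u - w (DV u))"
    by (rule sum.cong[OF refl]) (auto simp: S1_def red_DV assms(2))
  finally have eq: "(\<Sum>u\<in>S0. red_w H w R (DV u) - w (DV u) + DD V w R u)
      = (\<Sum>u\<in>S0 - S1. DD V w R u - w (DV u))" by simp
  have th: "\<forall>u\<in>S0. \<forall>v\<in>S0. u \<noteq> v \<longrightarrow> theta H u v \<le> 0"
    using S0(1) unfolding stable_induced by blast
  have "stable H S1" using th S10 S0R assms(2,3) unfolding stable_def by blast
  moreover have "S1 \<subseteq> R" using S10 S0R by blast
  moreover have "alphaR H w R \<le> W V w S1"
    using K[OF assms(1,2,3) S0R, of w] eq R2[OF assms(1,4,3) S0R S10] S0(2)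
    by (simp add: alphaR_eq)
  ultimately show ?thesis by blast
qed


lemma F4:
  assumes "finite V" "V = X \<union> Y" "S \<subseteq> V"
    and cross: "\<And>p. p \<in> offd V \<Longrightarrow> \<not> (fst p \<in> X \<and> snd p \<in> X) \<Longrightarrow> \<not> (fst p \<in> Y \<and> snd p \<in> Y) \<Longrightarrow> pc w S p = 0"
  shows "W V w S + W (X \<inter> Y) w (S \<inter> (X \<inter> Y)) = W X w (S \<inter> X) + W Y w (S \<inter> Y)"
proof -
  have XV: "X \<subseteq> V" "Y \<subseteq> V" "X \<inter> Y \<subseteq> V" using assms(2) by blast+
  have fX: "finite X" "finite Y" "finite (X \<inter> Y)" using finite_subset[OF _ assms(1)] XV by blast+
  have pt: "(\<Sum>p\<in>offd V. pc w S p) = (\<Sum>p\<in>offd V. if p \<in> offd X then pc w S p else 0)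
      + (\<Sum>p\<in>offd V. if p \<in> offd Y then pc w S p else 0)
      - (\<Sum>p\<in>offd V. if p \<in> offd (X \<inter> Y) then pc w S p else 0)"
    unfolding sum.distrib[symmetric] sum_subtractf[symmetric]
  proof (rule sum.cong[OF refl])
    fix p assume p: "p \<in> offd V"
    show "pc w S p = (if p \<in> offd X then pc w S p else 0) + (if p \<in> offd Y then pc w S p else 0)
      - (if p \<in> offd (X \<inter> Y) then pc w S p else 0)"
    proof (cases "fst p \<in> X \<and> snd p \<in> X \<or> fst p \<in> Y \<and> snd p \<in> Y")
      case True then show ?thesis using p by (auto simp: offd_def)
    next
      case False then show ?thesis using cross[OF p] p by (auto simp: offd_def)
    qed
  qed
  have c1: "(\<Sum>p\<in>offd X. pc w S p) = (\<Sum>p\<in>offd X. pc w (S \<inter> X) p)"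
    by (rule sum.cong[OF refl]) (auto simp: pc_def offd_def)
  have c2: "(\<Sum>p\<in>offd Y. pc w S p) = (\<Sum>p\<in>offd Y. pc w (S \<inter> Y) p)"
    by (rule sum.cong[OF refl]) (auto simp: pc_def offd_def)
  have c3: "(\<Sum>p\<in>offd (X \<inter> Y). pc w S p) = (\<Sum>p\<in>offd (X \<inter> Y). pc w (S \<inter> (X \<inter> Y)) p)"
    by (rule sum.cong[OF refl]) (auto simp: pc_def offd_def)
  have fS: "finite (S \<inter> X)" "finite (S \<inter> Y)" using fX by auto
  have v: "(\<Sum>u\<in>S. w (DV u)) + (\<Sum>u\<in>S \<inter> (X \<inter> Y). w (DV u)) = (\<Sum>u\<in>S \<inter> X. w (DV u)) + (\<Sum>u\<in>S \<inter> Y. w (DV u))"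
  proof -
    have "S \<inter> X \<union> S \<inter> Y = S" "S \<inter> X \<inter> (S \<inter> Y) = S \<inter> (X \<inter> Y)" using assms by auto
    then show ?thesis using sum.union_inter[OF fS, of "\<lambda>u. w (DV u)"] by simp
  qed
  have f1: "(\<Sum>p\<in>offd V. if p \<in> offd X then pc w S p else 0) = (\<Sum>p\<in>offd X. pc w S p)"
    by (rule FIL[OF assms(1) XV(1)])
  have f2: "(\<Sum>p\<in>offd V. if p \<in> offd Y then pc w S p else 0) = (\<Sum>p\<in>offd Y. pc w S p)"
    by (rule FIL[OF assms(1) XV(2)])
  have f3: "(\<Sum>p\<in>offd V. if p \<in> offd (X \<inter> Y) then pc w S p else 0) = (\<Sum>p\<in>offd (X \<inter> Y). pc w S p)"
    by (rule FIL[OF assms(1) XV(3)])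
  have s1: "S \<inter> X \<subseteq> X" "S \<inter> Y \<subseteq> Y" "S \<inter> (X \<inter> Y) \<subseteq> X \<inter> Y" by auto
  show ?thesis
    using pt f1 f2 f3 c1 c2 c3 v
      sw2[OF assms(1,3), of w] sw2[OF fX(1) s1(1), of w] sw2[OF fX(2) s1(2), of w]
      sw2[OF fX(3) s1(3), of w]
    by linarith
qed


lemma wok_of_weight:
  assumes "weight_fun G w"
  shows "wok (verts G) w"
  unfolding wok_def
proof (intro conjI ballI impI)
  fix u assume "u \<in> verts G"
  then have "DV u \<in> Dset G" by (simp add: Dset_def)
  then show "0 \<le> w (DV u)" using assms by (simp add: weight_fun_def)
next
  fix u v assume uv: "u \<in> verts G" "v \<in> verts G" "u \<noteq> v"
  then have "DO u v \<in> Dset G" by (auto simp: Dset_def)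
  then show "0 \<le> w (DO u v)" using assms by (simp add: weight_fun_def)
  show "w (DO u v) \<le> w (DU {u, v})" using assms uv by (simp add: weight_fun_def)
qed

lemma wok_mono: "wok V w \<Longrightarrow> X \<subseteq> V \<Longrightarrow> wok X w"
  unfolding wok_def by blast

lemma verts_GX: "verts (GX G X c1 c2) = X \<union> {c1, c2}"
  by (simp add: GX_def verts_def)

lemma theta_GX: "theta (GX G X c1 c2) u v = (if {u, v} = {c1, c2} then 0 else theta G u v)"
  by (simp add: GX_def theta_def)

lemma theta_sym: "theta H u v = theta H v u"
  by (simp add: theta_def insert_commute)

lemma stable_sub: "stable H S \<Longrightarrow> T \<subseteq> S \<Longrightarrow> stable H T"
  unfolding stable_def by blast

lemma wB_eq:
  "p \<notin> {DV c1, DO c1 c2, DO c2 c1, DU {c1, c2}} \<Longrightarrow> wB G w A c1 c2 p = w p"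
  unfolding wB_def Let_def by simp

lemma wB_vals:
  assumes "c1 \<noteq> c2"
  shows "wB G w A c1 c2 (DV c1) = alphaR (GX G A c1 c2) w (A \<union> {c1, c2}) - w (DV c2)"
    "wB G w A c1 c2 (DV c2) = w (DV c2)"
    "wB G w A c1 c2 (DO c1 c2) = alphaR (GX G A c1 c2) w (A \<union> {c1}) - alphaR (GX G A c1 c2) w (A \<union> {c1, c2}) + w (DV c2)"
    "wB G w A c1 c2 (DO c2 c1) = alphaR (GX G A c1 c2) w (A \<union> {c2}) - w (DV c2)"
    "wB G w A c1 c2 (DU {c1, c2}) = alphaR (GX G A c1 c2) w A"
  using assms unfolding wB_def Let_def by simp_all

lemma binom2_simps:
  fixes a b :: 'a
  shows "binom2 {} = {}" "binom2 {a} = {}" "a \<noteq> b \<Longrightarrow> binom2 {a, b} = {{a, b}}"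
proof -
  show "binom2 {} = {}" by (auto simp: binom2_def)
  show "binom2 {a} = {}"
    unfolding binom2_def by (auto simp: subset_singleton_iff)
  assume ab: "a \<noteq> b"
  show "binom2 {a, b} = {{a, b}}"
  proof
    show "binom2 {a, b} \<subseteq> {{a, b}}"
    proof
      fix e assume "e \<in> binom2 {a, b}"
      then have e: "e \<subseteq> {a, b}" "card e = 2" by (auto simp: binom2_def)
      then obtain x y where xy: "x \<noteq> y" "e = {x, y}"
        by (auto simp: card_2_iff)
      have "x \<in> {a,b}" "y \<in> {a,b}" using e xy by auto
      then have "e = {a, b}" using xy by auto
      then show "e \<in> {{a, b}}" by simp
    qed
    show "{{a, b}} \<subseteq> binom2 {a, b}" using ab by (auto simp: binom2_def)
  qed
qed

lemma WC:
  assumes "a \<noteq> b"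
  shows "W {a, b} w' {} = w' (DU {a, b})"
    "W {a, b} w' {a} = w' (DV a) + w' (DO a b)"
    "W {a, b} w' {b} = w' (DV b) + w' (DO b a)"
    "W {a, b} w' {a, b} = w' (DV a) + w' (DV b)"
proof -
  have d: "{a, b} - {a} = {b}" "{a, b} - {b} = {a}" using assms by auto
  show "W {a, b} w' {} = w' (DU {a, b})"
    using assms by (simp add: W_def setweight_def verts_def binom2_simps)
  show "W {a, b} w' {a} = w' (DV a) + w' (DO a b)"
    using assms by (simp add: W_def setweight_def verts_def binom2_simps d)
  show "W {a, b} w' {b} = w' (DV b) + w' (DO b a)"
    using assms by (simp add: W_def setweight_def verts_def binom2_simps d)
  show "W {a, b} w' {a, b} = w' (DV a) + w' (DV b)"
    using assms by (simp add: W_def setweight_def verts_def binom2_simps)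
qed

lemma sub2: "X \<subseteq> {a, b} \<Longrightarrow> X = {} \<or> X = {a} \<or> X = {b} \<or> X = {a, b}"
  by (cases "a \<in> X"; cases "b \<in> X") auto


theorem lemma3p11:
  fixes G :: "'a trigraph" and w :: "'a delem \<Rightarrow> int" and A B :: "'a set" and c1 c2 :: 'a
  assumes "is_trigraph G" and "weight_fun G w"
    and "cut_partition G A B {c1, c2}"
    and "c1 \<noteq> c2" and "stable G {c1, c2}"
  shows "weight_fun (GX G B c1 c2) (wB G w A c1 c2)
         \<and> alpha (GX G B c1 c2) (wB G w A c1 c2) = alpha G w"
proof -
  define V where "V = verts G"
  define C where "C = {c1, c2}"
  define VA where "VA = A \<union> C"
  define VB where "VB = B \<union> C"
  define GA where "GA = GX G A c1 c2"
  define GB where "GB = GX G B c1 c2"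
  define w' where "w' = wB G w A c1 c2"
  define aAC where "aAC = alphaR GA w (A \<union> {c1, c2})"
  define aA1 where "aA1 = alphaR GA w (A \<union> {c1})"
  define aA2 where "aA2 = alphaR GA w (A \<union> {c2})"
  define aA where "aA = alphaR GA w A"
  note cp = assms(3)[unfolded cut_partition_def]
  have VU: "A \<union> B \<union> C = V" using cp by (simp add: C_def V_def)
  have dAB: "A \<inter> B = {}" and dAC: "A \<inter> C = {}" and dBC: "B \<inter> C = {}"
    using cp by (auto simp: C_def)
  have cross: "\<And>a b. a \<in> A \<Longrightarrow> b \<in> B \<Longrightarrow> theta G a b = -1" using cp by blast
  have c12: "c1 \<noteq> c2" by (rule assms(4))
  have finV: "finite V" using assms(1) by (simp add: is_trigraph_def V_def)
  have VAV: "VA \<subseteq> V" and VBV: "VB \<subseteq> V" and CV: "C \<subseteq> V"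
    using VU by (auto simp: VA_def VB_def)
  have finVA: "finite VA" by (rule finite_subset[OF VAV finV])
  have finVB: "finite VB" by (rule finite_subset[OF VBV finV])
  have finC: "finite C" by (simp add: C_def)
  have wokV: "wok V w" using wok_of_weight[OF assms(2)] by (simp add: V_def)
  have wokA: "wok VA w" by (rule wok_mono[OF wokV VAV])
  have wokB: "wok VB w" by (rule wok_mono[OF wokV VBV])
  have vGA: "verts GA = VA" by (simp add: GA_def VA_def C_def verts_GX)
  have vGB: "verts GB = VB" by (simp add: GB_def VB_def C_def verts_GX)
  have tGA: "\<And>u v. theta GA u v = (if {u, v} = {c1, c2} then 0 else theta G u v)"
    by (simp add: GA_def theta_GX)
  have tGB: "\<And>u v. theta GB u v = (if {u, v} = {c1, c2} then 0 else theta G u v)"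
    by (simp add: GB_def theta_GX)
  have tc12: "theta G c1 c2 \<le> 0" using assms(5) c12 by (auto simp: stable_def)
  have w2: "0 \<le> w (DV c2)" using wokV CV by (auto simp: wok_def C_def)
  have crossw: "w (DO a b) = 0 \<and> w (DO b a) = 0 \<and> w (DU {a, b}) = 0" if "a \<in> A" "b \<in> B" for a b
  proof -
    have "a \<in> verts G" "b \<in> verts G" "a \<noteq> b" using that VU dAB by (auto simp: V_def)
    moreover have "theta G a b \<noteq> 0" using cross[OF that] by simp
    ultimately show ?thesis using assms(2) unfolding weight_fun_def by blast
  qed
  have rg: "W VA w S \<le> alphaR GA w R" if "stable GA S" "S \<subseteq> R" "R \<subseteq> VA" for S R
    by (rule red_ge[OF finVA vGA that(3,1,2)])
  have rl: "\<exists>S. stable GA S \<and> S \<subseteq> R \<and> alphaR GA w R \<le> W VA w S" if "R \<subseteq> VA" for R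
    by (rule red_le[OF finVA vGA that wokA])
  have RA: "A \<subseteq> VA" "A \<union> {c1} \<subseteq> VA" "A \<union> {c2} \<subseteq> VA" "A \<union> {c1, c2} \<subseteq> VA"
    by (auto simp: VA_def C_def)
  have c2A: "c2 \<notin> A" "c1 \<notin> A" using dAC by (auto simp: C_def)
  have n1: "0 \<le> aA"
  proof -
    have "stable GA {}" by (simp add: stable_def)
    then have "W VA w {} \<le> aA" unfolding aA_def using rg[of "{}" A] RA by simp
    moreover have "0 \<le> W VA w {}" by (rule W_nonneg[OF finVA wokA]) simp
    ultimately show ?thesis by simp
  qed
  have st2: "stable GA {c2}" using vGA by (simp add: stable_def VA_def C_def)
  have W2: "w (DV c2) \<le> W VA w {c2}"
    using W_ge[OF finVA wokA, of "{c2}"] by (simp add: VA_def C_def)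
  have n2: "w (DV c2) \<le> aAC" "w (DV c2) \<le> aA2"
    using rg[OF st2, of "A \<union> {c1, c2}"] rg[OF st2, of "A \<union> {c2}"] RA W2
    by (auto simp: aAC_def aA2_def)
  have rem2: "aA0 \<le> aA' + w (DV c2)"
    if h1: "aA0 = alphaR GA w (A \<union> X)" and h2: "aA' = alphaR GA w (A \<union> (X - {c2}))" and h3: "X \<subseteq> C" for aA0 aA' X
  proof -
    have R0: "A \<union> X \<subseteq> VA" "A \<union> (X - {c2}) \<subseteq> VA" using h3 by (auto simp: VA_def)
    obtain S where S: "stable GA S" "S \<subseteq> A \<union> X" "aA0 \<le> W VA w S"
      using rl[OF R0(1)] h1 by blast
    have SV: "S \<subseteq> VA" using S(2) R0(1) by blast
    show ?thesis
    proof (cases "c2 \<in> S")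
      case True
      have "W VA w S - w (DV c2) \<le> W VA w (S - {c2})" by (rule R1[OF finVA wokA SV True])
      moreover have "W VA w (S - {c2}) \<le> aA'"
        using rg[OF stable_sub[OF S(1)], of "S - {c2}" "A \<union> (X - {c2})"] S(2) R0(2) h2 by blast
      ultimately show ?thesis using S(3) by linarith
    next
      case False
      then have "S \<subseteq> A \<union> (X - {c2})" using S(2) by blast
      then have "W VA w S \<le> aA'" using rg[OF S(1) _ R0(2)] h2 by blast
      then show ?thesis using S(3) w2 by linarith
    qed
  qed
  have n3: "aAC \<le> aA1 + w (DV c2)"
    by (rule rem2[of _ "{c1, c2}"]) (use c12 in \<open>auto simp: aAC_def aA1_def C_def insert_Diff_if\<close>)
  have n4: "aA2 \<le> aA + w (DV c2)"
    by (rule rem2[of _ "{c2}"]) (auto simp: aA2_def aA_def C_def)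
  have n5: "aA1 + w (DV c2) \<le> aAC + aA"
  proof -
    obtain S1 where S1: "stable GA S1" "S1 \<subseteq> A \<union> {c1}" "aA1 \<le> W VA w S1"
      using rl[OF RA(2)] by (auto simp: aA1_def)
    have S1V: "S1 \<subseteq> VA" using S1(2) RA(2) by blast
    show ?thesis
    proof (cases "c1 \<in> S1")
      case False
      then have "S1 \<subseteq> A" using S1(2) by blast
      then have "W VA w S1 \<le> aA" using rg[OF S1(1) _ RA(1)] by (simp add: aA_def)
      then show ?thesis using S1(3) n2 by linarith
    next
      case True
      define P where "P = {u \<in> S1. u \<noteq> c1 \<and> \<not> theta GA u c2 \<le> 0}"
      have PS: "P \<subseteq> S1" by (auto simp: P_def)
      have c2S: "c2 \<in> VA - S1" using S1(2) c2A c12 by (auto simp: VA_def C_def)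
      have ul: "W VA w S1 + w (DV c2) \<le> W VA w (S1 - P \<union> {c2}) + W VA w P"
        by (rule UL[OF finVA wokA S1V c2S PS])
      have stP: "stable GA P" by (rule stable_sub[OF S1(1) PS])
      have PA: "P \<subseteq> A" using S1(2) by (auto simp: P_def)
      have stU: "stable GA (S1 - P \<union> {c2})"
        unfolding stable_def
      proof (intro conjI ballI impI)
        show "S1 - P \<union> {c2} \<subseteq> verts GA" using S1V c2S vGA by auto
      next
        fix u v assume uv: "u \<in> S1 - P \<union> {c2}" "v \<in> S1 - P \<union> {c2}" "u \<noteq> v"
        have stS1: "\<And>x y. x \<in> S1 \<Longrightarrow> y \<in> S1 \<Longrightarrow> x \<noteq> y \<Longrightarrow> theta GA x y \<le> 0"
          using S1(1) by (auto simp: stable_def)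
        have nc: "\<And>x. x \<in> S1 - P \<Longrightarrow> theta GA x c2 \<le> 0"
        proof -
          fix x assume x: "x \<in> S1 - P"
          show "theta GA x c2 \<le> 0"
          proof (cases "x = c1")
            case True then show ?thesis by (simp add: tGA)
          next
            case False then show ?thesis using x by (auto simp: P_def)
          qed
        qed
        show "theta GA u v \<le> 0"
        proof (cases "u = c2")
          case True
          then have "v \<in> S1 - P" using uv by auto
          then show ?thesis using nc True theta_sym[of GA c2 v] by simp
        next
          case False
          then have u: "u \<in> S1 - P" using uv by auto
          show ?thesis
          proof (cases "v = c2")
            case True then show ?thesis using nc u by simp
          next
            case False then show ?thesis using u uv stS1 by auto
          qed
        qed
      qed
      have "W VA w (S1 - P \<union> {c2}) \<le> aAC"
        unfolding aAC_def by (rule rg[OF stU _ RA(4)]) (use S1(2) in auto)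
      moreover have "W VA w P \<le> aA" unfolding aA_def by (rule rg[OF stP PA RA(1)])
      ultimately show ?thesis using ul S1(3) by linarith
    qed
  qed
  have vals: "w' (DV c1) = aAC - w (DV c2)" "w' (DV c2) = w (DV c2)"
    "w' (DO c1 c2) = aA1 - aAC + w (DV c2)" "w' (DO c2 c1) = aA2 - w (DV c2)"
    "w' (DU {c1, c2}) = aA"
    using wB_vals[OF c12, of G w A] by (simp_all add: w'_def aAC_def aA1_def aA2_def aA_def GA_def)
  have weq: "\<And>p. p \<notin> {DV c1, DO c1 c2, DO c2 c1, DU {c1, c2}} \<Longrightarrow> w' p = w p"
    using wB_eq by (simp add: w'_def)
  have DG: "Dset GB \<subseteq> Dset G"
    using VBV vGB unfolding Dset_def binom2_def V_def by auto
  have nn: "0 \<le> w' p" if p: "p \<in> Dset GB" for p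
  proof (cases "p \<in> {DV c1, DO c1 c2, DO c2 c1, DU {c1, c2}}")
    case True
    then show ?thesis using vals n1 n2 n3 by auto
  next
    case False
    then show ?thesis using weq[OF False] p DG assms(2) by (auto simp: weight_fun_def)
  qed
  have zz: "theta GB u v \<noteq> 0 \<longrightarrow> w' (DO u v) = 0 \<and> w' (DO v u) = 0 \<and> w' (DU {u, v}) = 0"
    if uv: "u \<in> verts GB" "v \<in> verts GB" "u \<noteq> v" for u v
  proof
    have uvV: "u \<in> verts G" "v \<in> verts G" using uv vGB VBV by (auto simp: V_def)
    assume t: "theta GB u v \<noteq> 0"
    then have ne: "{u, v} \<noteq> {c1, c2}" by (auto simp: tGB)
    then have "theta G u v \<noteq> 0" using t by (simp add: tGB)
    then have "w (DO u v) = 0 \<and> w (DO v u) = 0 \<and> w (DU {u, v}) = 0"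
      using assms(2) uvV uv(3) unfolding weight_fun_def by blast
    moreover have "w' (DO u v) = w (DO u v)" "w' (DO v u) = w (DO v u)" "w' (DU {u, v}) = w (DU {u, v})"
      using ne by (auto intro!: weq simp: doubleton_eq_iff insert_commute)
    ultimately show "w' (DO u v) = 0 \<and> w' (DO v u) = 0 \<and> w' (DU {u, v}) = 0" by simp
  qed
  have le: "w' (DO u v) \<le> w' (DU {u, v})"
    if uv: "u \<in> verts GB" "v \<in> verts GB" "u \<noteq> v" for u v
  proof (cases "{u, v} = {c1, c2}")
    case True
    then have "(u = c1 \<and> v = c2) \<or> (u = c2 \<and> v = c1)" by (auto simp: doubleton_eq_iff)
    then show ?thesis
    proof
      assume "u = c1 \<and> v = c2"
      then show ?thesis using vals n5 by simp
    next
      assume "u = c2 \<and> v = c1"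
      then show ?thesis using vals n4 by (simp add: insert_commute)
    qed
  next
    case False
    have uvV: "u \<in> verts G" "v \<in> verts G" using uv vGB VBV by (auto simp: V_def)
    have "w (DO u v) \<le> w (DU {u, v})" using assms(2) uvV uv(3) unfolding weight_fun_def by blast
    moreover have "w' (DO u v) = w (DO u v)" "w' (DU {u, v}) = w (DU {u, v})"
      using False by (auto intro!: weq simp: doubleton_eq_iff insert_commute)
    ultimately show ?thesis by simp
  qed
  have wf: "weight_fun GB w'"
    unfolding weight_fun_def using nn zz le by blast
  have CVB: "C \<subseteq> VB" by (auto simp: VB_def)
  have hW: "W C w' X = alphaR GA w (A \<union> X)" if X: "X \<subseteq> C" for X
  proof -
    have "X = {} \<or> X = {c1} \<or> X = {c2} \<or> X = {c1, c2}" using sub2 X by (simp add: C_def)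
    moreover have "W C w' {} = alphaR GA w (A \<union> {})"
      using WC(1)[OF c12, of w'] vals by (simp add: C_def aA_def)
    moreover have "W C w' {c1} = alphaR GA w (A \<union> {c1})"
      using WC(2)[OF c12, of w'] vals by (simp add: C_def aA1_def)
    moreover have "W C w' {c2} = alphaR GA w (A \<union> {c2})"
      using WC(3)[OF c12, of w'] vals by (simp add: C_def aA2_def)
    moreover have "W C w' {c1, c2} = alphaR GA w (A \<union> {c1, c2})"
      using WC(4)[OF c12, of w'] vals by (simp add: C_def aAC_def)
    ultimately show ?thesis by (auto simp: C_def)
  qed
  have QC: "W VB w' S - W C w' (S \<inter> C) = W VB w S - W C w (S \<inter> C)" if S: "S \<subseteq> VB" for S
  proof (rule Qcong[OF finVB CVB S])
    fix u assume "u \<in> VB - C"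
    then have "u \<noteq> c1" by (auto simp: C_def)
    then show "w' (DV u) = w (DV u)" by (intro weq) auto
  next
    fix u v assume "u \<in> VB" "v \<in> VB" and n: "\<not> (u \<in> C \<and> v \<in> C)"
    then show "w' (DO u v) = w (DO u v)" by (intro weq) (auto simp: C_def)
    show "w' (DU {u, v}) = w (DU {u, v})"
    proof (intro weq)
      have "{u, v} \<noteq> {c1, c2}" using n by (auto simp: C_def doubleton_eq_iff)
      then show "DU {u, v} \<notin> {DV c1, DO c1 c2, DO c2 c1, DU {c1, c2}}" by simp
    qed
  qed
  have VAB: "V = VA \<union> VB" using VU by (auto simp: VA_def VB_def)
  have VAiB: "VA \<inter> VB = C" using dAB by (auto simp: VA_def VB_def)
  have decomp: "W V w S + W C w (S \<inter> C) = W VA w (S \<inter> VA) + W VB w (S \<inter> VB)" if S: "S \<subseteq> V" for S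
  proof -
    have "W V w S + W (VA \<inter> VB) w (S \<inter> (VA \<inter> VB)) = W VA w (S \<inter> VA) + W VB w (S \<inter> VB)"
    proof (rule F4[OF finV VAB S])
      fix p assume p: "p \<in> offd V" and n1: "\<not> (fst p \<in> VA \<and> snd p \<in> VA)"
        and n2: "\<not> (fst p \<in> VB \<and> snd p \<in> VB)"
      have pV: "fst p \<in> V" "snd p \<in> V" using p by (auto simp: offd_def)
      have "(fst p \<in> A \<and> snd p \<in> B) \<or> (fst p \<in> B \<and> snd p \<in> A)"
        using pV n1 n2 VU by (auto simp: VA_def VB_def)
      then have "w (DO (fst p) (snd p)) = 0 \<and> w (DO (snd p) (fst p)) = 0 \<and> w (DU {fst p, snd p}) = 0"
      proof
        assume "fst p \<in> A \<and> snd p \<in> B"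
        then show ?thesis using crossw[of "fst p" "snd p"] by simp
      next
        assume "fst p \<in> B \<and> snd p \<in> A"
        then show ?thesis using crossw[of "snd p" "fst p"] by (simp add: insert_commute)
      qed
      then show "pc w S p = 0" by (simp add: pc_def)
    qed
    then show ?thesis by (simp add: VAiB)
  qed
  have stA: "stable GA (S \<inter> VA)" if "stable G S" for S
    using that vGA unfolding stable_def by (auto simp: tGA)
  have stB: "stable GB (S \<inter> VB)" if "stable G S" for S
    using that vGB unfolding stable_def by (auto simp: tGB)
  have comb: "stable G (SA \<union> SB)"
    if h: "stable GA SA" "stable GB SB" "SA \<inter> C = SB \<inter> C" for SA SB
  proof -
    have SAV: "SA \<subseteq> VA" "SB \<subseteq> VB" using h(1,2) vGA vGB by (auto simp: stable_def)
    have tA: "theta G x y \<le> 0" if "x \<in> SA" "y \<in> SA" "x \<noteq> y" for x y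
    proof (cases "{x, y} = {c1, c2}")
      case True
      then have "theta G x y = theta G c1 c2"
        by (auto simp: doubleton_eq_iff theta_sym[of G c2 c1])
      then show ?thesis using tc12 by simp
    next
      case False
      have "theta GA x y \<le> 0" using h(1) that unfolding stable_def by blast
      then show ?thesis using False by (simp add: tGA)
    qed
    have tB: "theta G x y \<le> 0" if "x \<in> SB" "y \<in> SB" "x \<noteq> y" for x y
    proof (cases "{x, y} = {c1, c2}")
      case True
      then have "theta G x y = theta G c1 c2"
        by (auto simp: doubleton_eq_iff theta_sym[of G c2 c1])
      then show ?thesis using tc12 by simp
    next
      case False
      have "theta GB x y \<le> 0" using h(2) that unfolding stable_def by blast
      then show ?thesis using False by (simp add: tGB)
    qed
    have tX: "theta G x y \<le> 0" if "x \<in> SA" "y \<in> SB" "x \<noteq> y" for x y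
    proof (cases "x \<in> SB")
      case True then show ?thesis using tB that by blast
    next
      case False
      show ?thesis
      proof (cases "y \<in> SA")
        case True then show ?thesis using tA that by blast
      next
        case yA: False
        have "x \<notin> C" using False that(1) h(3) by blast
        then have xA: "x \<in> A" using that(1) SAV by (auto simp: VA_def)
        have "y \<notin> C" using yA that(2) h(3) by blast
        then have yB: "y \<in> B" using that(2) SAV by (auto simp: VB_def)
        show ?thesis using cross[OF xA yB] by simp
      qed
    qed
    show ?thesis unfolding stable_def
    proof (intro conjI ballI impI)
      show "SA \<union> SB \<subseteq> verts G" using SAV VAV VBV by (auto simp: V_def)
    next
      fix x y assume "x \<in> SA \<union> SB" "y \<in> SA \<union> SB" "x \<noteq> y"
      then show "theta G x y \<le> 0"
        using tA tB tX[of x y] tX[of y x] theta_sym[of G x y] by auto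
    qed
  qed
  have fGB: "finite (verts GB)" using finVB vGB by simp
  have fG: "finite (verts G)" using finV by (simp add: V_def)
  have ge: "alpha G w \<le> alpha GB w'"
  proof -
    obtain S where S: "stable G S" "alpha G w = W V w S"
      using alpha_ex[OF fG, of w] by (auto simp: sw_W V_def)
    have SV: "S \<subseteq> V" using S(1) by (auto simp: stable_def V_def)
    have e1: "W VB w' (S \<inter> VB) \<le> alpha GB w'"
      using alpha_ge[OF fGB stB[OF S(1)], of w'] by (simp add: sw_W vGB)
    have i1: "S \<inter> VB \<inter> C = S \<inter> C" "S \<inter> VA \<inter> C = S \<inter> C" by (auto simp: VA_def VB_def)
    have e2: "W VB w' (S \<inter> VB) - W C w' (S \<inter> C) = W VB w (S \<inter> VB) - W C w (S \<inter> C)"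
      using QC[of "S \<inter> VB"] i1 by auto
    have e3: "W C w' (S \<inter> C) = alphaR GA w (A \<union> (S \<inter> C))" by (rule hW) auto
    have e4: "W VA w (S \<inter> VA) \<le> alphaR GA w (A \<union> (S \<inter> C))"
      by (rule rg[OF stA[OF S(1)]]) (auto simp: VA_def C_def)
    show ?thesis using e1 e2 e3 e4 decomp[OF SV] S(2) by linarith
  qed
  have le: "alpha GB w' \<le> alpha G w"
  proof -
    obtain SB where SB: "stable GB SB" "alpha GB w' = W VB w' SB"
      using alpha_ex[OF fGB, of w'] by (auto simp: sw_W vGB)
    have SBV: "SB \<subseteq> VB" using SB(1) vGB by (auto simp: stable_def)
    define C' where "C' = SB \<inter> C"
    have RC: "A \<union> C' \<subseteq> VA" by (auto simp: C'_def VA_def)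
    obtain SA where SA: "stable GA SA" "SA \<subseteq> A \<union> C'" "alphaR GA w (A \<union> C') \<le> W VA w SA"
      using rl[OF RC] by blast
    define D where "D = SA \<inter> C"
    have DC': "D \<subseteq> C'" using SA(2) dAC by (auto simp: D_def C'_def)
    define SB' where "SB' = SB - (C - D)"
    have SB'1: "SB' \<subseteq> SB" "SB - SB' \<subseteq> C" by (auto simp: SB'_def)
    have SB'C: "SB' \<inter> C = D" using DC' by (auto simp: SB'_def C'_def)
    have stB': "stable GB SB'" by (rule stable_sub[OF SB(1) SB'1(1)])
    have mono: "W VB w SB - W C w (SB \<inter> C) \<le> W VB w SB' - W C w (SB' \<inter> C)"
      by (rule Qmono[OF finVB CVB SBV SB'1 wokB])
    have SAV: "SA \<subseteq> VA" using SA(1) vGA by (auto simp: stable_def)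
    have SAC: "SA \<inter> C = SB' \<inter> C" using SB'C by (simp add: D_def)
    have stS: "stable G (SA \<union> SB')" by (rule comb[OF SA(1) stB' SAC])
    have SV: "SA \<union> SB' \<subseteq> V" using SAV SBV SB'1 VAV VBV by blast
    have SB'V: "SB' \<subseteq> VB" using SBV SB'1 by blast
    have i1: "(SA \<union> SB') \<inter> VA = SA" using SAV SB'V SAC dAB by (auto simp: VA_def VB_def)
    have i2: "(SA \<union> SB') \<inter> VB = SB'" using SAV SB'V SAC dAB by (auto simp: VA_def VB_def)
    have i3: "(SA \<union> SB') \<inter> C = D" using SAC SB'C by blast
    have e5: "W V w (SA \<union> SB') \<le> alpha G w"
      using alpha_ge[OF fG stS, of w] by (simp add: sw_W V_def)
    have e2: "W VB w' SB - W C w' C' = W VB w SB - W C w C'"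
      using QC[OF SBV] by (simp add: C'_def)
    have e3: "W C w' C' = alphaR GA w (A \<union> C')" by (rule hW) (auto simp: C'_def)
    show ?thesis using SB(2) e2 e3 SA(3) mono decomp[OF SV] i1 i2 i3 SB'C e5
      by (simp add: C'_def)
  qed
  have "alpha GB w' = alpha G w" using ge le by simp
  then show ?thesis using wf by (simp add: GB_def w'_def)
qed

end
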